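(* Let $n$ and $k$ be even integers with $1\le k<n/2$, $\gcd(n,k)=2$ and $4\nmid n$. Then (a) $\lambda\in A(n,k)$ if and only if $k^2\equiv1\pmod{n/2}$; (b) $\tau\in A(n,k)$ if and only if $k^2\equiv-1\pmod{n/2}$. Moreover, if $\lambda\in A(n,k)$ then $\lambda\in B(n,k)$, and if $\tau\in A(n,k)$ then $\tau\in B(n,k)$.
   Context: $\mathrm{DGP}(n,k)$ ($1\le k<n/2$) is the graph with vertex set $\{(u_i,j),(v_i,j): 0\le i\le n-1,\ j\in\{0,1\}\}$ and edges $\{(u_i,j),(u_{i+1},1-j)\}$, $\{(u_i,j),(v_i,1-j)\}$ (spokes, forming the set $\mathcal{S}$), $\{(v_i,j),(v_{i+k},1-j)\}$, subscripts mod $n$ (the canonical double cover of the generalized Petersen graph $\mathrm{GP}(n,k)$). $A(n,k)$ is its automorphism group and $B(n,k)$ the setwise stabilizer of $\mathcal{S}$ in $A(n,k)$. Define permutations $\lambda,\tau$ of the vertex set (subscripts mod $n$; $n$ even so parity of $i+j$ is well defined): if $i+j$ is odd, $(u_i,j)^\lambda=(v_{1+(i-k)k},j)$, $(v_i,j)^\lambda=(u_{ik},j)$; if $i+j$ is even, $(u_i,j)^\lambda=(v_{ik},j)$, $(v_i,j)^\lambda=(u_{1+(i-k)k},j)$. Similarly, if $i+j$ is odd, $(u_i,j)^\tau=(v_{-1+(i-k)k},j)$, $(v_i,j)^\tau=(u_{ik},j)$; if $i+j$ is even, $(u_i,j)^\tau=(v_{ik},j)$, $(v_i,j)^\tau=(u_{-1+(i-k)k},j)$.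 *)

theory Defs
  imports "HOL-Number_Theory.Number_Theory"
begin

text \<open>Vertices of DGP(n,k): U i j stands for (u_i, j), V i j for (v_i, j),
  with 0 <= i < n and j in {0,1}.\<close>
datatype vtx = U nat nat | V nat nat

definition dgp_verts :: "nat \<Rightarrow> vtx set" where
  "dgp_verts n = {U i j | i j. i < n \<and> j < 2} \<union> {V i j | i j. i < n \<and> j < 2}"

definition md :: "nat \<Rightarrow> int \<Rightarrow> nat" where
  "md n x = nat (x mod int n)"

definition dgp_outer :: "nat \<Rightarrow> nat \<Rightarrow> vtx set set" where
  "dgp_outer n k = {{U i j, U (md n (int i + 1)) (1 - j)} | i j. i < n \<and> j < 2}"

definition dgp_spokes :: "nat \<Rightarrow> nat \<Rightarrow> vtx set set" where
  "dgp_spokes n k = {{U i j, V i (1 - j)} | i j. i < n \<and> j < 2}"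

definition dgp_inner :: "nat \<Rightarrow> nat \<Rightarrow> vtx set set" where
  "dgp_inner n k = {{V i j, V (md n (int i + int k)) (1 - j)} | i j. i < n \<and> j < 2}"

definition dgp_edges :: "nat \<Rightarrow> nat \<Rightarrow> vtx set set" where
  "dgp_edges n k = dgp_outer n k \<union> dgp_spokes n k \<union> dgp_inner n k"

definition in_A :: "nat \<Rightarrow> nat \<Rightarrow> (vtx \<Rightarrow> vtx) \<Rightarrow> bool" where
  "in_A n k f \<longleftrightarrow> bij_betw f (dgp_verts n) (dgp_verts n) \<and>
     (\<forall>x\<in>dgp_verts n. \<forall>y\<in>dgp_verts n. {x, y} \<in> dgp_edges n k \<longleftrightarrow> {f x, f y} \<in> dgp_edges n k)"

definition in_B :: "nat \<Rightarrow> nat \<Rightarrow> (vtx \<Rightarrow> vtx) \<Rightarrow> bool" where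
  "in_B n k f \<longleftrightarrow> in_A n k f \<and> (\<lambda>e. f ` e) ` dgp_spokes n k = dgp_spokes n k"

definition lam :: "nat \<Rightarrow> nat \<Rightarrow> vtx \<Rightarrow> vtx" where
  "lam n k x = (case x of
     U i j \<Rightarrow> (if odd (i + j) then V (md n (1 + (int i - int k) * int k)) j
                                else V (md n (int i * int k)) j)
   | V i j \<Rightarrow> (if odd (i + j) then U (md n (int i * int k)) j
                                else U (md n (1 + (int i - int k) * int k)) j))"

definition tau :: "nat \<Rightarrow> nat \<Rightarrow> vtx \<Rightarrow> vtx" where
  "tau n k x = (case x of
     U i j \<Rightarrow> (if odd (i + j) then V (md n (-1 + (int i - int k) * int k)) j
                                else V (md n (int i * int k)) j)
   | V i j \<Rightarrow> (if odd (i + j) then U (md n (int i * int k)) j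
                                else U (md n (-1 + (int i - int k) * int k)) j))"

end

theory Submission
  imports Defs
begin

lemma one_minus_lt2 [simp]: "Suc 0 - j < 2" "(1::nat) - j < 2"
  by arith+

lemma md_lt: "0 < n \<Longrightarrow> md n x < n"
  unfolding md_def by (simp add: nat_less_iff)

lemma md_int: "0 < n \<Longrightarrow> int (md n x) = x mod int n"
  unfolding md_def by simp

lemma md_cong: "0 < n \<Longrightarrow> [int (md n x) = x] (mod int n)"
  by (simp add: md_int cong_def)

lemma md_eqI: "b < n \<Longrightarrow> [int b = x] (mod int n) \<Longrightarrow> md n x = b"
  unfolding md_def cong_def by (metis mod_pos_pos_trivial nat_int of_nat_0_le_iff of_nat_less_iff)

lemma md_eq_iff: "0 < n \<Longrightarrow> md n x = md n y \<longleftrightarrow> [x = y] (mod int n)"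
  unfolding md_def cong_def by (metis Euclidean_Rings.pos_mod_sign eq_nat_nat_iff of_nat_0_less_iff)

lemma lt_cong_eq: "a < n \<Longrightarrow> b < n \<Longrightarrow> [int a = int b] (mod int n) \<Longrightarrow> a = b"
  unfolding cong_def by (metis mod_pos_pos_trivial of_nat_0_le_iff of_nat_eq_iff of_nat_less_iff)

lemma md_cong_iff: "0 < n \<Longrightarrow> [int (md n x) = int (md n y) + z] (mod int n) \<longleftrightarrow> [x = y + z] (mod int n)"
  by (simp add: md_int cong_def mod_add_left_eq)

lemma cong_helper: "[x = y] (mod m) \<Longrightarrow> (X::int) - Y = (x - y) * t \<Longrightarrow> [X = Y] (mod m)"
  by (metis cong_iff_dvd_diff dvd_mult2)

lemma cong_helper2: "[x = y] (mod m) \<Longrightarrow> [u = v] (mod m) \<Longrightarrow> (X::int) - Y = (x - y) * t + (u - v) \<Longrightarrow> [X = Y] (mod m)"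
  by (metis cong_iff_dvd_diff dvd_mult2 dvd_add)

lemma parity1: "even n \<Longrightarrow> [int b = int a + 1] (mod int n) \<Longrightarrow> (j::nat)<2 \<Longrightarrow> odd (b + (1-j)) \<longleftrightarrow> odd (a + j)"
proof -
  assume a: "even n" "[int b = int a + 1] (mod int n)" "j<2"
  then have "[int b = int a + 1] (mod 2)" by (metis cong_dvd_modulus even_of_nat_iff)
  then show ?thesis using a(3) unfolding cong_def by presburger
qed

lemma parity2: "even n \<Longrightarrow> even k \<Longrightarrow> [int b = int a + int k] (mod int n) \<Longrightarrow> (j::nat)<2 \<Longrightarrow> odd (b + (1-j)) \<longleftrightarrow> even (a + j)"
proof -
  assume a: "even n" "even k" "[int b = int a + int k] (mod int n)" "j<2"
  then have "[int b = int a + int k] (mod 2)" by (metis cong_dvd_modulus even_of_nat_iff)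
  then show ?thesis using a(2,4) unfolding cong_def by presburger
qed

lemma finite_verts: "finite (dgp_verts n)"
proof -
  have "dgp_verts n \<subseteq> (\<lambda>p. U (fst p) (snd p)) ` ({..<n} \<times> {..<2}) \<union> (\<lambda>p. V (fst p) (snd p)) ` ({..<n} \<times> {..<2})"
    unfolding dgp_verts_def by force
  then show ?thesis by (rule finite_subset) auto
qed

lemma image_edges_eq:
  assumes "finite E" "E \<subseteq> Pow A" "inj_on f A" "\<forall>e\<in>E. f ` e \<in> E"
  shows "(\<lambda>e. f ` e) ` E = E"
proof -
  have inj: "inj_on (\<lambda>e. f ` e) E"
  proof (rule inj_onI)
    fix a b assume "a \<in> E" "b \<in> E" "f ` a = f ` b"
    then show "a = b" using inj_on_image_eq_iff[OF assms(3), of a b] assms(2) by blast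
  qed
  have sub: "(\<lambda>e. f ` e) ` E \<subseteq> E" using assms(4) by blast
  have "card ((\<lambda>e. f ` e) ` E) = card E" using inj by (rule card_image)
  then show ?thesis using card_subset_eq[OF assms(1) sub] by blast
qed

fun Rr :: "nat \<Rightarrow> nat \<Rightarrow> vtx \<Rightarrow> vtx \<Rightarrow> bool" where
  "Rr n k (U a j) (U b j') = (a<n \<and> b<n \<and> j<2 \<and> j' = 1-j \<and> [int b = int a + 1] (mod int n))"
| "Rr n k (U a j) (V b j') = (a<n \<and> b<n \<and> j<2 \<and> j' = 1-j \<and> a = b)"
| "Rr n k (V a j) (V b j') = (a<n \<and> b<n \<and> j<2 \<and> j' = 1-j \<and> [int b = int a + int k] (mod int n))"
| "Rr n k (V a j) (U b j') = False"

fun Rs :: "nat \<Rightarrow> vtx \<Rightarrow> vtx \<Rightarrow> bool" where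
  "Rs n (U a j) (V b j') = (a<n \<and> b<n \<and> j<2 \<and> j' = 1-j \<and> a = b)"
| "Rs n _ _ = False"

lemma spoke_mem: "i<n \<Longrightarrow> j<2 \<Longrightarrow> {U i j, V i (1-j)} \<in> dgp_spokes n k"
  unfolding dgp_spokes_def by blast
lemma outer_mem: "i<n \<Longrightarrow> j<2 \<Longrightarrow> {U i j, U (md n (int i + 1)) (1-j)} \<in> dgp_outer n k"
  unfolding dgp_outer_def by blast
lemma inner_mem: "i<n \<Longrightarrow> j<2 \<Longrightarrow> {V i j, V (md n (int i + int k)) (1-j)} \<in> dgp_inner n k"
  unfolding dgp_inner_def by blast

lemma spokes_iff: "{x,y} \<in> dgp_spokes n k \<longleftrightarrow> Rs n x y \<or> Rs n y x"
proof
  assume "{x,y} \<in> dgp_spokes n k"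
  then obtain i j where "i<n" "j<2" "{x,y} = {U i j, V i (1-j)}" unfolding dgp_spokes_def by blast
  then have "(x = U i j \<and> y = V i (1-j)) \<or> (y = U i j \<and> x = V i (1-j))"
    by (simp add: doubleton_eq_iff) blast
  then show "Rs n x y \<or> Rs n y x" using \<open>i<n\<close> \<open>j<2\<close> by auto
next
  have s: "{U a j, V b j'} \<in> dgp_spokes n k" if "Rs n (U a j) (V b j')" for a b j j'
  proof -
    have e: "{U a j, V b j'} = {U a j, V a (1 - j)}" using that by simp
    show ?thesis unfolding e using spoke_mem that by simp
  qed
  assume "Rs n x y \<or> Rs n y x"
  then show "{x,y} \<in> dgp_spokes n k"
    using s by (cases x; cases y) (simp_all add: insert_commute)
qed

lemma edges_iff:
  assumes "0 < n"
  shows "{x,y} \<in> dgp_edges n k \<longleftrightarrow> Rr n k x y \<or> Rr n k y x"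
proof
  assume "{x,y} \<in> dgp_edges n k"
  then consider (o) i j where "i<n" "j<2" "{x,y} = {U i j, U (md n (int i + 1)) (1-j)}"
    | (s) i j where "i<n" "j<2" "{x,y} = {U i j, V i (1-j)}"
    | (n) i j where "i<n" "j<2" "{x,y} = {V i j, V (md n (int i + int k)) (1-j)}"
    unfolding dgp_edges_def dgp_outer_def dgp_spokes_def dgp_inner_def by blast
  then show "Rr n k x y \<or> Rr n k y x"
  proof cases
    case o
    from o(3) have "(x = U i j \<and> y = U (md n (int i + 1)) (1-j)) \<or> (y = U i j \<and> x = U (md n (int i + 1)) (1-j))"
      by (simp add: doubleton_eq_iff) blast
    then show ?thesis using o(1,2) md_lt[OF assms, of "int i + 1"] md_cong[OF assms, of "int i + 1"] by auto
  next
    case s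
    then have "(x = U i j \<and> y = V i (1-j)) \<or> (y = U i j \<and> x = V i (1-j))"
      by (simp add: doubleton_eq_iff) blast
    then show ?thesis using s(1,2) by auto
  next
    case n
    from n(3) have "(x = V i j \<and> y = V (md n (int i + int k)) (1-j)) \<or> (y = V i j \<and> x = V (md n (int i + int k)) (1-j))"
      by (simp add: doubleton_eq_iff) blast
    then show ?thesis using n(1,2) md_lt[OF assms, of "int i + int k"] md_cong[OF assms, of "int i + int k"] by auto
  qed
next
  have o: "{U a j, U b j'} \<in> dgp_edges n k" if "Rr n k (U a j) (U b j')" for a b j j'
  proof -
    have "md n (int a + 1) = b" using that by (auto intro: md_eqI)
    then have e: "{U a j, U b j'} = {U a j, U (md n (int a + 1)) (1 - j)}" using that by simp
    have "{U a j, U (md n (int a + 1)) (1 - j)} \<in> dgp_outer n k" using outer_mem that by simp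
    then show ?thesis unfolding e dgp_edges_def by blast
  qed
  have nn: "{V a j, V b j'} \<in> dgp_edges n k" if "Rr n k (V a j) (V b j')" for a b j j'
  proof -
    have "md n (int a + int k) = b" using that by (auto intro: md_eqI)
    then have e: "{V a j, V b j'} = {V a j, V (md n (int a + int k)) (1 - j)}" using that by simp
    have "{V a j, V (md n (int a + int k)) (1 - j)} \<in> dgp_inner n k" using inner_mem that by simp
    then show ?thesis unfolding e dgp_edges_def by blast
  qed
  have s: "{U a j, V b j'} \<in> dgp_edges n k" if "Rr n k (U a j) (V b j')" for a b j j'
  proof -
    have e: "{U a j, V b j'} = {U a j, V a (1 - j)}" using that by simp
    have "{U a j, V a (1 - j)} \<in> dgp_spokes n k" using spoke_mem that by simp
    then show ?thesis unfolding e dgp_edges_def by blast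
  qed
  have main: "{x,y} \<in> dgp_edges n k" if "Rr n k x y" for x y
    using that o nn s by (cases x; cases y) simp_all
  assume "Rr n k x y \<or> Rr n k y x"
  then show "{x,y} \<in> dgp_edges n k"
    using main[of x y] main[of y x] by (metis insert_commute)
qed

definition gm :: "nat \<Rightarrow> nat \<Rightarrow> int \<Rightarrow> vtx \<Rightarrow> vtx" where
  "gm n k c x = (case x of
     U i j \<Rightarrow> V (md n (if odd (i + j) then c + (int i - int k) * int k else int i * int k)) j
   | V i j \<Rightarrow> U (md n (if odd (i + j) then int i * int k else c + (int i - int k) * int k)) j)"

lemma lam_gm: "lam n k = gm n k 1"
  by (auto simp: fun_eq_iff lam_def gm_def split: vtx.split)

lemma tau_gm: "tau n k = gm n k (-1)"
  by (auto simp: fun_eq_iff tau_def gm_def split: vtx.split)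

lemma verts_U [simp]: "U i j \<in> dgp_verts n \<longleftrightarrow> i < n \<and> j < 2"
  by (auto simp: dgp_verts_def)

lemma verts_V [simp]: "V i j \<in> dgp_verts n \<longleftrightarrow> i < n \<and> j < 2"
  by (auto simp: dgp_verts_def)

lemma edge_cases:
  assumes "e \<in> dgp_edges n k"
  obtains (o) i j where "i<n" "j<2" "e = {U i j, U (md n (int i + 1)) (1-j)}"
    | (s) i j where "i<n" "j<2" "e = {U i j, V i (1-j)}"
    | (n) i j where "i<n" "j<2" "e = {V i j, V (md n (int i + int k)) (1-j)}"
  using assms unfolding dgp_edges_def dgp_outer_def dgp_spokes_def dgp_inner_def by blast

lemma edge_pair: "e \<in> dgp_edges n k \<Longrightarrow> \<exists>x y. e = {x, y}"
  by (erule edge_cases) blast+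

lemma edges_sub: "0 < n \<Longrightarrow> dgp_edges n k \<subseteq> Pow (dgp_verts n)"
proof
  fix e assume n: "0 < n" and e: "e \<in> dgp_edges n k"
  from e show "e \<in> Pow (dgp_verts n)"
    by (cases rule: edge_cases) (simp_all add: md_lt[OF n])
qed

lemma spokes_sub: "dgp_spokes n k \<subseteq> dgp_edges n k"
  unfolding dgp_edges_def by blast

lemma finite_edges: "0 < n \<Longrightarrow> finite (dgp_edges n k)"
  using edges_sub finite_verts by (metis finite_Pow_iff finite_subset)

context
  fixes n k :: nat and c m h :: int
  assumes npos: "0 < n" and ev_n: "even n" and ev_k: "even k"
    and c1: "c = 1 \<or> c = -1"
    and nm: "int n = 2*m" and kh: "int k = 2*h" and cop: "coprime m h" and odd_m: "odd m"
    and kn: "k < n" and m1: "m > 1"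
begin

lemma gm_verts: "x \<in> dgp_verts n \<Longrightarrow> gm n k c x \<in> dgp_verts n"
  by (cases x) (simp_all add: gm_def md_lt[OF npos])

lemma core1:
  assumes "a < n" "b < n" "even (a + b)" "[int a * int k = int b * int k] (mod int n)"
  shows "a = b"
proof -
  have "int n dvd int a * int k - int b * int k" using assms(4) by (simp add: cong_iff_dvd_diff)
  also have "int a * int k - int b * int k = 2 * ((int a - int b) * h)" using kh by (simp add: algebra_simps)
  finally have "2 * m dvd 2 * ((int a - int b) * h)" using nm by simp
  then have "m dvd (int a - int b) * h" by simp
  then have d1: "m dvd int a - int b" using cop by (simp add: coprime_dvd_mult_left_iff)
  have d2: "2 dvd int a - int b" using assms(3) by presburger
  have "coprime m 2" using odd_m by simp
  then have "m * 2 dvd int a - int b" using d1 d2 divides_mult by blast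
  then have "[int a = int b] (mod int n)" using nm by (simp add: cong_iff_dvd_diff mult.commute)
  then show ?thesis using lt_cong_eq assms(1,2) by blast
qed

lemma core2:
  assumes "[int a * int k = c + (int b - int k) * int k] (mod int n)"
  shows False
proof -
  have "int n dvd int a * int k - (c + (int b - int k) * int k)" using assms by (simp add: cong_iff_dvd_diff)
  moreover have "2 dvd int n" using nm by simp
  ultimately have d: "2 dvd int a * int k - (c + (int b - int k) * int k)" using dvd_trans by blast
  have "c = 2 * ((int a - int b + int k) * h) - (int a * int k - (c + (int b - int k) * int k))"
    using kh by (simp add: algebra_simps)
  also have "2 dvd \<dots>" by (rule dvd_diff[OF _ d]) simp
  finally have "2 dvd c" .
  then show False using c1 by auto
qed

lemma gm_inj: "inj_on (gm n k c) (dgp_verts n)"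
proof (rule inj_onI)
  fix x y assume x: "x \<in> dgp_verts n" and y: "y \<in> dgp_verts n" and e: "gm n k c x = gm n k c y"
  show "x = y"
  proof (cases x)
    case (U a j)
    then obtain b j' where yU: "y = U b j'" using e by (cases y) (auto simp: gm_def)
    have jj: "j' = j" using e U yU by (simp add: gm_def)
    have cg: "[(if odd (a + j) then c + (int a - int k) * int k else int a * int k)
            = (if odd (b + j) then c + (int b - int k) * int k else int b * int k)] (mod int n)"
      using e U yU jj by (simp add: gm_def md_eq_iff[OF npos])
    have ab: "a < n" "b < n" using x y U yU by auto
    consider "odd (a+j)" "odd (b+j)" | "even (a+j)" "even (b+j)" | "odd (a+j)" "even (b+j)" | "even (a+j)" "odd (b+j)" by blast
    then show ?thesis
    proof cases
      case 1
      then have "[c + (int a - int k) * int k = c + (int b - int k) * int k] (mod int n)" using cg by simp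
      then have "[int a * int k = int b * int k] (mod int n)"
        by (rule cong_helper[where t=1]) (simp add: algebra_simps)
      moreover have "even (a + b)" using 1 by presburger
      ultimately have "a = b" using core1 ab by blast
      then show ?thesis using U yU jj by simp
    next
      case 2
      have "even (a + b)" using 2 by presburger
      then have "a = b" using core1 ab cg 2 by simp
      then show ?thesis using U yU jj by simp
    next
      case 3
      then have "[int b * int k = c + (int a - int k) * int k] (mod int n)" using cg by (simp add: cong_sym_eq)
      then show ?thesis using core2 by blast
    next
      case 4
      then have "[int a * int k = c + (int b - int k) * int k] (mod int n)" using cg by simp
      then show ?thesis using core2 by blast
    qed
  next
    case (V a j)
    then obtain b j' where yV: "y = V b j'" using e by (cases y) (auto simp: gm_def)
    have jj: "j' = j" using e V yV by (simp add: gm_def)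
    have cg: "[(if odd (a + j) then int a * int k else c + (int a - int k) * int k)
            = (if odd (b + j) then int b * int k else c + (int b - int k) * int k)] (mod int n)"
      using e V yV jj by (simp add: gm_def md_eq_iff[OF npos])
    have ab: "a < n" "b < n" using x y V yV by auto
    consider "odd (a+j)" "odd (b+j)" | "even (a+j)" "even (b+j)" | "odd (a+j)" "even (b+j)" | "even (a+j)" "odd (b+j)" by blast
    then show ?thesis
    proof cases
      case 2
      then have "[c + (int a - int k) * int k = c + (int b - int k) * int k] (mod int n)" using cg by simp
      then have "[int a * int k = int b * int k] (mod int n)"
        by (rule cong_helper[where t=1]) (simp add: algebra_simps)
      moreover have "even (a + b)" using 2 by presburger
      ultimately have "a = b" using core1 ab by blast
      then show ?thesis using V yV jj by simp
    next
      case 1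
      have "even (a + b)" using 1 by presburger
      then have "a = b" using core1 ab cg 1 by simp
      then show ?thesis using V yV jj by simp
    next
      case 4
      then have "[int b * int k = c + (int a - int k) * int k] (mod int n)" using cg by (simp add: cong_sym_eq)
      then show ?thesis using core2 by blast
    next
      case 3
      then have "[int a * int k = c + (int b - int k) * int k] (mod int n)" using cg by simp
      then show ?thesis using core2 by blast
    qed
  qed
qed

lemma gm_bij: "bij_betw (gm n k c) (dgp_verts n) (dgp_verts n)"
proof -
  have "gm n k c ` dgp_verts n \<subseteq> dgp_verts n" using gm_verts by blast
  then have "gm n k c ` dgp_verts n = dgp_verts n" using endo_inj_surj finite_verts gm_inj by blast
  then show ?thesis using gm_inj by (simp add: bij_betw_def)
qed

lemma innerR: "[Y = X + int k] (mod int n) \<Longrightarrow> j < 2 \<Longrightarrow> Rr n k (V (md n X) j) (V (md n Y) (1-j))"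
  by (simp add: md_lt[OF npos] md_cong_iff[OF npos])

lemma outerR:
  assumes "[Y = X + c] (mod int n)" "j < 2"
  shows "Rr n k (U (md n X) j) (U (md n Y) (1-j)) \<or> Rr n k (U (md n Y) (1-j)) (U (md n X) j)"
  using c1
proof
  assume "c = 1"
  then show ?thesis using assms by (simp add: md_lt[OF npos] md_cong_iff[OF npos])
next
  assume c: "c = -1"
  have "[X = Y + 1] (mod int n)"
    by (rule cong_helper[OF assms(1), where t="-1"]) (simp add: c algebra_simps)
  then show ?thesis using assms(2) by (simp add: md_lt[OF npos] md_cong_iff[OF npos])
qed

lemma Rs_Rr: "Rs n x y \<Longrightarrow> Rr n k x y"
  by (cases x; cases y) auto

lemma spk: "Rs n x y \<Longrightarrow> Rs n (gm n k c y) (gm n k c x)"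
proof (cases x; cases y)
  fix a j b j' assume r: "Rs n x y" and x: "x = U a j" and y: "y = V b j'"
  then have h: "a < n" "j < 2" "b = a" "j' = 1 - j" by auto
  have p: "odd (a + (1 - j)) \<longleftrightarrow> even (a + j)" using h(2) by presburger
  show ?thesis using h p x y by (simp add: gm_def md_lt[OF npos])
qed auto

context
  assumes H: "[2 * int k ^ 2 = 2 * c] (mod int n)"
begin

lemma fwd: "Rr n k x y \<Longrightarrow> Rr n k (gm n k c x) (gm n k c y) \<or> Rr n k (gm n k c y) (gm n k c x)"
proof (cases x; cases y)
  fix a j b j' assume r: "Rr n k x y" and x: "x = U a j" and y: "y = U b j'"
  then have h: "a < n" "b < n" "j < 2" "j' = 1 - j" "[int b = int a + 1] (mod int n)" by auto
  have p: "odd (b + (1 - j)) \<longleftrightarrow> odd (a + j)" using parity1 ev_n h by blast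
  show ?thesis
  proof (cases "odd (a + j)")
    case True
    have "[c + (int b - int k) * int k = (c + (int a - int k) * int k) + int k] (mod int n)"
      by (rule cong_helper[OF h(5), where t="int k"]) (simp add: algebra_simps)
    then show ?thesis using innerR h(3) True p x y h(4) by (simp add: gm_def)
  next
    case False
    have "[int b * int k = int a * int k + int k] (mod int n)"
      by (rule cong_helper[OF h(5), where t="int k"]) (simp add: algebra_simps)
    then show ?thesis using innerR h(3) False p x y h(4) by (simp add: gm_def)
  qed
next
  fix a j b j' assume r: "Rr n k x y" and x: "x = U a j" and y: "y = V b j'"
  then have "Rs n x y" by simp
  then have "Rs n (gm n k c y) (gm n k c x)" by (rule spk)
  then show ?thesis using Rs_Rr by blast
next
  fix a j b j' assume r: "Rr n k x y" and x: "x = V a j" and y: "y = V b j'"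
  then have h: "a < n" "b < n" "j < 2" "j' = 1 - j" "[int b = int a + int k] (mod int n)" by auto
  have p: "odd (b + (1 - j)) \<longleftrightarrow> even (a + j)" using parity2 ev_n ev_k h by blast
  show ?thesis
  proof (cases "odd (a + j)")
    case True
    have "[c + (int b - int k) * int k = int a * int k + c] (mod int n)"
      by (rule cong_helper[OF h(5), where t="int k"]) (simp add: algebra_simps)
    then show ?thesis using outerR h(3) True p x y h(4) by (simp add: gm_def)
  next
    case False
    have "[int b * int k = (c + (int a - int k) * int k) + c] (mod int n)"
      by (rule cong_helper2[OF h(5) H, where t="int k"]) (simp add: algebra_simps power2_eq_square)
    then show ?thesis using outerR h(3) False p x y h(4) by (simp add: gm_def)
  qed
qed auto

lemma img_edges: "(\<lambda>e. gm n k c ` e) ` dgp_edges n k = dgp_edges n k"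
proof (rule image_edges_eq[OF finite_edges[OF npos] edges_sub[OF npos] gm_inj], intro ballI)
  fix e assume e: "e \<in> dgp_edges n k"
  then obtain x y where xy: "e = {x, y}" using edge_pair by blast
  then have "Rr n k x y \<or> Rr n k y x" using e edges_iff[OF npos] by blast
  then have "Rr n k (gm n k c x) (gm n k c y) \<or> Rr n k (gm n k c y) (gm n k c x)" using fwd by blast
  then show "gm n k c ` e \<in> dgp_edges n k" using xy edges_iff[OF npos] by simp
qed

lemma img_spokes: "(\<lambda>e. gm n k c ` e) ` dgp_spokes n k = dgp_spokes n k"
proof (rule image_edges_eq[OF _ _ gm_inj])
  show "finite (dgp_spokes n k)" by (rule finite_subset[OF spokes_sub finite_edges[OF npos]])
  show "dgp_spokes n k \<subseteq> Pow (dgp_verts n)" using edges_sub[OF npos] spokes_sub by blast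
  show "\<forall>e\<in>dgp_spokes n k. gm n k c ` e \<in> dgp_spokes n k"
  proof
  fix e assume e: "e \<in> dgp_spokes n k"
  then obtain i j where "i<n" "j<2" and xy: "e = {U i j, V i (1-j)}" unfolding dgp_spokes_def by blast
  then have "Rs n (U i j) (V i (1-j))" by simp
  then have "Rs n (gm n k c (V i (1-j))) (gm n k c (U i j))" by (rule spk)
  then have "{gm n k c (V i (1-j)), gm n k c (U i j)} \<in> dgp_spokes n k" using spokes_iff by blast
  moreover have "gm n k c ` e = {gm n k c (V i (1-j)), gm n k c (U i j)}" using xy by auto
  ultimately show "gm n k c ` e \<in> dgp_spokes n k" by simp
  qed
qed

lemma inA: "in_A n k (gm n k c)"
  unfolding in_A_def
proof (intro conjI gm_bij ballI)
  fix x y assume x: "x \<in> dgp_verts n" and y: "y \<in> dgp_verts n"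
  show "{x, y} \<in> dgp_edges n k \<longleftrightarrow> {gm n k c x, gm n k c y} \<in> dgp_edges n k"
  proof
    assume "{x, y} \<in> dgp_edges n k"
    then have "gm n k c ` {x, y} \<in> (\<lambda>e. gm n k c ` e) ` dgp_edges n k" by blast
    then show "{gm n k c x, gm n k c y} \<in> dgp_edges n k" using img_edges by simp
  next
    assume "{gm n k c x, gm n k c y} \<in> dgp_edges n k"
    then have "gm n k c ` {x, y} \<in> (\<lambda>e. gm n k c ` e) ` dgp_edges n k" using img_edges by simp
    then obtain e where e: "e \<in> dgp_edges n k" "gm n k c ` e = gm n k c ` {x, y}" by blast
    have "e \<subseteq> dgp_verts n" using e(1) edges_sub[OF npos] by blast
    moreover have "{x, y} \<subseteq> dgp_verts n" using x y by blast
    ultimately have "e = {x, y}" using e(2) inj_on_image_eq_iff[OF gm_inj] by blast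
    then show "{x, y} \<in> dgp_edges n k" using e(1) by simp
  qed
qed

lemma inB: "in_B n k (gm n k c)"
  unfolding in_B_def using inA img_spokes by blast

end

lemma not_dvd_sq: "m dvd int k ^ 2 \<Longrightarrow> False"
proof -
  assume d: "m dvd int k ^ 2"
  have "coprime m 2" using odd_m by simp
  then have "coprime m (int k)" using cop kh by simp
  then have "coprime m (int k ^ 2)" by simp
  then have "is_unit m" using d coprime_common_divisor[of m "int k ^ 2" m] by simp
  then have "m dvd 1" by simp
  then show False using zdvd_imp_le[of m 1] m1 by simp
qed

lemma onlyif:
  assumes A: "in_A n k (gm n k c)"
  shows "[int k ^ 2 = c] (mod m)"
proof -
  have vs: "V 0 0 \<in> dgp_verts n" "V k 1 \<in> dgp_verts n" using npos kn by auto
  have "Rr n k (V 0 0) (V k 1)" using npos kn by simp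
  then have "{V 0 0, V k 1} \<in> dgp_edges n k" using edges_iff[OF npos] by blast
  then have "{gm n k c (V 0 0), gm n k c (V k 1)} \<in> dgp_edges n k" using A vs unfolding in_A_def by blast
  moreover have "gm n k c (V 0 0) = U (md n (c + (0 - int k) * int k)) 0" by (simp add: gm_def)
  moreover have "odd (k + 1)" using ev_k by simp
  then have "gm n k c (V k 1) = U (md n (int k * int k)) 1" by (simp add: gm_def)
  ultimately have "Rr n k (U (md n (c + (0 - int k) * int k)) 0) (U (md n (int k * int k)) 1)
     \<or> Rr n k (U (md n (int k * int k)) 1) (U (md n (c + (0 - int k) * int k)) 0)"
    using edges_iff[OF npos] by simp
  then have "[int k * int k = (c + (0 - int k) * int k) + 1] (mod int n) \<or> [c + (0 - int k) * int k = int k * int k + 1] (mod int n)"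
    by (simp add: md_cong_iff[OF npos] md_lt[OF npos])
  then have "int n dvd 2 * int k ^ 2 - c - 1 \<or> int n dvd c - 1 - 2 * int k ^ 2"
    by (simp add: cong_iff_dvd_diff algebra_simps power2_eq_square)
  show ?thesis using c1
  proof
    assume c: "c = 1"
    from \<open>int n dvd 2 * int k ^ 2 - c - 1 \<or> int n dvd c - 1 - 2 * int k ^ 2\<close>
    have "2 * m dvd 2 * (int k ^ 2 - 1) \<or> 2 * m dvd 2 * (- (int k ^ 2))"
      using c nm by (simp add: algebra_simps)
    then have "m dvd int k ^ 2 - 1 \<or> m dvd - (int k ^ 2)" by (simp only: dvd_mult_cancel_left) simp
    then show ?thesis using not_dvd_sq c by (auto simp: cong_iff_dvd_diff)
  next
    assume c: "c = -1"
    from \<open>int n dvd 2 * int k ^ 2 - c - 1 \<or> int n dvd c - 1 - 2 * int k ^ 2\<close>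
    have "2 * m dvd 2 * (int k ^ 2) \<or> 2 * m dvd - (2 * (int k ^ 2 + 1))"
      using c nm by (simp add: algebra_simps)
    then have "m dvd int k ^ 2 \<or> m dvd int k ^ 2 + 1" by (simp only: dvd_minus_iff dvd_mult_cancel_left) simp
    then show ?thesis using not_dvd_sq c by (auto simp: cong_iff_dvd_diff)
  qed
qed

lemma gen: "(in_A n k (gm n k c) \<longleftrightarrow> [int k ^ 2 = c] (mod m)) \<and> (in_A n k (gm n k c) \<longrightarrow> in_B n k (gm n k c))"
proof -
  have *: "[2 * int k ^ 2 = 2 * c] (mod int n)" if "[int k ^ 2 = c] (mod m)"
  proof -
    have "m dvd int k ^ 2 - c" using that by (simp add: cong_iff_dvd_diff)
    then have "2 * m dvd 2 * (int k ^ 2 - c)" by (rule mult_dvd_mono[OF dvd_refl])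
    then show ?thesis using nm by (simp add: cong_iff_dvd_diff right_diff_distrib)
  qed
  show ?thesis using onlyif inA[OF *] inB[OF *] by blast
qed

end


theorem lemma5p3:
  fixes n k :: nat
  assumes "even n" and "even k" and "1 \<le> k" and "2 * k < n"
    and "gcd n k = 2" and "\<not> 4 dvd n"
  shows "(in_A n k (lam n k) \<longleftrightarrow> [int k ^ 2 = 1] (mod int n div 2))
       \<and> (in_A n k (tau n k) \<longleftrightarrow> [int k ^ 2 = -1] (mod int n div 2))
       \<and> (in_A n k (lam n k) \<longrightarrow> in_B n k (lam n k))
       \<and> (in_A n k (tau n k) \<longrightarrow> in_B n k (tau n k))"
proof -
  define m where "m = int n div 2"
  define h where "h = int k div 2"
  have npos: "0 < n" using assms(4) by simp
  have nm: "int n = 2 * m" unfolding m_def using assms(1) by presburger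
  have kh: "int k = 2 * h" unfolding h_def using assms(2) by presburger
  have oddm: "odd m" unfolding m_def using assms(1,6) by presburger
  have kn: "k < n" using assms(4) by simp
  have m1: "m > 1" unfolding m_def using assms(1-4,6) by presburger
  have "gcd (int n) (int k) = 2" using assms(5) by (metis gcd_int_int_eq of_nat_numeral)
  then have "\<bar>2\<bar> * gcd m h = 2" using nm kh gcd_mult_distrib_int[of 2 m h] by simp
  then have "gcd m h = 1" by simp
  then have cop: "coprime m h" by (simp add: coprime_iff_gcd_eq_1)
  have g1: "(in_A n k (gm n k 1) \<longleftrightarrow> [int k ^ 2 = 1] (mod m)) \<and> (in_A n k (gm n k 1) \<longrightarrow> in_B n k (gm n k 1))"
    by (rule gen[of n k 1 m h]) (use npos assms(1,2) nm kh cop oddm kn m1 in auto)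
  have g2: "(in_A n k (gm n k (-1)) \<longleftrightarrow> [int k ^ 2 = -1] (mod m)) \<and> (in_A n k (gm n k (-1)) \<longrightarrow> in_B n k (gm n k (-1)))"
    by (rule gen[of n k "-1" m h]) (use npos assms(1,2) nm kh cop oddm kn m1 in auto)
  show ?thesis using g1 g2 unfolding lam_gm tau_gm m_def by blast
qed

end
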